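(* Let $p$ be a prime, $X$ a compact space, and $q\in\mathbb{N}$ a prime different from $p$. Then for all $f,g\in C(X,\mathbb{Q}_p)$: $g|^*f$ if and only if there exists $h\in C(X,\mathbb{Q}_p)$ with $h^q=g^q+pf^q$.
   Context: $C(X,\mathbb{Q}_p)$ is the ring of continuous functions $X\to\mathbb{Q}_p$. The canonical $p$-adic divisibility $|^*$ on it is defined by $g|^*f\Leftrightarrow v_p(g(x))\le v_p(f(x))$ for all $x\in X$, where $v_p$ is the $p$-adic valuation (with $v_p(0)=\infty$). *)

theory Defs
  imports "HOL-Computational_Algebra.Computational_Algebra" "HOL-Library.Extended_Real"
begin

definition rat_vp :: "nat \<Rightarrow> rat \<Rightarrow> int" where
  "rat_vp p r = (case quotient_of r of (a, b) \<Rightarrow>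
      int (multiplicity (int p) a) - int (multiplicity (int p) b))"

definition rat_vge :: "nat \<Rightarrow> rat \<Rightarrow> int \<Rightarrow> bool" where
  "rat_vge p r n \<longleftrightarrow> r = 0 \<or> rat_vp p r \<ge> n"

definition padic_cauchy :: "nat \<Rightarrow> (nat \<Rightarrow> rat) \<Rightarrow> bool" where
  "padic_cauchy p s \<longleftrightarrow> (\<forall>n::int. \<exists>N. \<forall>m\<ge>N. \<forall>k\<ge>N. rat_vge p (s m - s k) n)"

definition padic_null :: "nat \<Rightarrow> (nat \<Rightarrow> rat) \<Rightarrow> bool" where
  "padic_null p s \<longleftrightarrow> (\<forall>n::int. \<exists>N. \<forall>m\<ge>N. rat_vge p (s m) n)"

definition padic_rel :: "nat \<Rightarrow> ((nat \<Rightarrow> rat) \<times> (nat \<Rightarrow> rat)) set" where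
  "padic_rel p = {(s, t). padic_cauchy p s \<and> padic_cauchy p t \<and> padic_null p (\<lambda>n. s n - t n)}"

type_synonym qp = "(nat \<Rightarrow> rat) set"

text \<open>The field Q_p: the completion of Q w.r.t. the p-adic absolute value,
  as equivalence classes of p-adic Cauchy sequences.\<close>
definition Qp :: "nat \<Rightarrow> qp set" where
  "Qp p = {s. padic_cauchy p s} // padic_rel p"

definition qp_of_rat :: "nat \<Rightarrow> rat \<Rightarrow> qp" where
  "qp_of_rat p r = padic_rel p `` {\<lambda>_. r}"

definition qp_add :: "nat \<Rightarrow> qp \<Rightarrow> qp \<Rightarrow> qp" where
  "qp_add p x y = \<Union>{padic_rel p `` {\<lambda>n. s n + t n} | s t. s \<in> x \<and> t \<in> y}"

definition qp_mult :: "nat \<Rightarrow> qp \<Rightarrow> qp \<Rightarrow> qp" where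
  "qp_mult p x y = \<Union>{padic_rel p `` {\<lambda>n. s n * t n} | s t. s \<in> x \<and> t \<in> y}"

definition qp_neg :: "nat \<Rightarrow> qp \<Rightarrow> qp" where
  "qp_neg p x = \<Union>{padic_rel p `` {\<lambda>n. - s n} | s. s \<in> x}"

definition qp_pow :: "nat \<Rightarrow> qp \<Rightarrow> nat \<Rightarrow> qp" where
  "qp_pow p x k = (qp_mult p x ^^ k) (qp_of_rat p 1)"

definition qp_val :: "nat \<Rightarrow> qp \<Rightarrow> ereal" where
  "qp_val p x = (if x = qp_of_rat p 0 then \<infinity>
     else ereal (of_int (THE v. \<exists>s\<in>x. \<exists>N. \<forall>n\<ge>N. s n \<noteq> 0 \<and> rat_vp p (s n) = v)))"

definition qp_continuous :: "nat \<Rightarrow> ('a::topological_space \<Rightarrow> qp) \<Rightarrow> bool" where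
  "qp_continuous p f \<longleftrightarrow> (\<forall>x. f x \<in> Qp p) \<and>
     (\<forall>x (n::int). \<exists>U. open U \<and> x \<in> U \<and>
        (\<forall>y\<in>U. qp_val p (qp_add p (f y) (qp_neg p (f x))) \<ge> ereal (of_int n)))"

definition padic_dvd_star :: "nat \<Rightarrow> ('a \<Rightarrow> qp) \<Rightarrow> ('a \<Rightarrow> qp) \<Rightarrow> bool" where
  "padic_dvd_star p g f \<longleftrightarrow> (\<forall>x. qp_val p (g x) \<le> qp_val p (f x))"

end

theory Submission
  imports Defs
begin

locale padic = fixes p :: nat assumes pp: "prime p"

context padic begin

lemma pint: "prime (int p)" using pp by simp
lemma pnu: "\<not> is_unit (int p)" using pint by (metis prime_elem_not_unit prime_imp_prime_elem)

definition mu :: "int \<Rightarrow> int" where "mu a = int (multiplicity (int p) a)"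

lemma mu_mult: "a \<noteq> 0 \<Longrightarrow> b \<noteq> 0 \<Longrightarrow> mu (a*b) = mu a + mu b"
  unfolding mu_def using pint by (simp add: prime_elem_multiplicity_mult_distrib)

lemma rep: fixes x :: rat obtains a b where "b \<noteq> 0" "x = of_int a / of_int b"
proof -
  obtain a b where q: "quotient_of x = (a,b)" by (cases "quotient_of x")
  have "b \<noteq> 0" using quotient_of_denom_pos[OF q] by simp
  thus ?thesis using that quotient_of_div[OF q] by blast
qed

lemma vp_frac: assumes "a \<noteq> 0" "b \<noteq> 0"
  shows "rat_vp p (of_int a / of_int b) = mu a - mu b"
proof -
  obtain a0 b0 where q: "quotient_of (of_int a / of_int b) = (a0,b0)" by (cases "quotient_of (of_int a / of_int b)")
  have e: "(of_int a / of_int b :: rat) = of_int a0 / of_int b0" using quotient_of_div[OF q] .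
  have b0: "b0 \<noteq> 0" using quotient_of_denom_pos[OF q] by simp
  have a0: "a0 \<noteq> 0" using e assms by auto
  have "(of_int (a*b0)::rat) = of_int (a0*b)" using e assms b0 by (simp add: field_simps)
  hence "a*b0 = a0*b" by (simp only: of_int_eq_iff)
  hence "mu a + mu b0 = mu a0 + mu b" using mu_mult assms a0 b0 by metis
  thus ?thesis unfolding rat_vp_def q mu_def by simp
qed

lemma vp_mult: assumes "x \<noteq> 0" "y \<noteq> 0" shows "rat_vp p (x*y) = rat_vp p x + rat_vp p y"
proof -
  obtain a b where ab: "b \<noteq> 0" "x = of_int a / of_int b" by (rule rep)
  obtain c d where cd: "d \<noteq> 0" "y = of_int c / of_int d" by (rule rep)
  have a: "a \<noteq> 0" and c: "c \<noteq> 0" using assms ab cd by auto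
  have "x*y = of_int (a*c) / of_int (b*d)" using ab cd by simp
  moreover have "rat_vp p (of_int (a*c) / of_int (b*d)) = mu (a*c) - mu (b*d)"
    by (rule vp_frac) (use a c ab cd in auto)
  ultimately have "rat_vp p (x*y) = mu (a*c) - mu (b*d)" by simp
  also have "\<dots> = rat_vp p x + rat_vp p y" using vp_frac a c ab cd mu_mult by simp
  finally show ?thesis .
qed

lemma vp_one: "rat_vp p 1 = 0"
  using vp_frac[of 1 1] by simp

lemma vp_neg: "rat_vp p (-x) = rat_vp p x"
proof (cases "x = 0")
  case False
  obtain a b where ab: "b \<noteq> 0" "x = of_int a / of_int b" by (rule rep)
  have a: "a \<noteq> 0" using False ab by auto
  have "-x = of_int (-a) / of_int b" using ab by simp
  moreover have "rat_vp p (of_int (-a) / of_int b) = mu (-a) - mu b" by (rule vp_frac) (use a ab in auto)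
  moreover have "rat_vp p x = mu a - mu b" using ab vp_frac a by simp
  ultimately show ?thesis unfolding mu_def by (simp add: multiplicity_uminus_right)
qed simp

lemma vge_add: assumes "rat_vge p x n" "rat_vge p y n" shows "rat_vge p (x+y) n"
proof (cases "x = 0 \<or> y = 0 \<or> x + y = 0")
  case True thus ?thesis using assms unfolding rat_vge_def by auto
next
  case False
  obtain a b where ab: "b \<noteq> 0" "x = of_int a / of_int b" by (rule rep)
  obtain c d where cd: "d \<noteq> 0" "y = of_int c / of_int d" by (rule rep)
  have a: "a \<noteq> 0" and c: "c \<noteq> 0" using False ab cd by auto
  have s: "x + y = of_int (a*d + c*b) / of_int (b*d)" using ab cd by (simp add: field_simps)
  have "(of_int (a*d + c*b) :: rat) \<noteq> 0" using s False by auto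
  hence s0: "a*d + c*b \<noteq> 0" by (metis of_int_0)
  have hx: "n \<le> mu a - mu b" using assms(1) False vp_frac a ab unfolding rat_vge_def by auto
  have hy: "n \<le> mu c - mu d" using assms(2) False vp_frac c cd unfolding rat_vge_def by auto
  define t where "t = n + mu b + mu d"
  have "t \<le> mu (a*d + c*b)"
  proof (cases "t \<le> 0")
    case True thus ?thesis unfolding mu_def by simp
  next
    case False
    have "nat t \<le> multiplicity (int p) (a*d)" using hx mu_mult[OF a cd(1)] False unfolding t_def mu_def by auto
    hence d1: "int p ^ nat t dvd a*d" by (rule multiplicity_dvd')
    have "nat t \<le> multiplicity (int p) (c*b)" using hy mu_mult[OF c ab(1)] False unfolding t_def mu_def by auto
    hence d2: "int p ^ nat t dvd c*b" by (rule multiplicity_dvd')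
    have "int p ^ nat t dvd a*d + c*b" using d1 d2 by simp
    hence "nat t \<le> multiplicity (int p) (a*d + c*b)" using multiplicity_geI s0 pnu by blast
    thus ?thesis using False unfolding mu_def by simp
  qed
  moreover have "rat_vp p (of_int (a*d + c*b) / of_int (b*d)) = mu (a*d+c*b) - mu (b*d)"
    by (rule vp_frac) (use s0 ab cd in auto)
  ultimately have "n \<le> rat_vp p (x+y)" using s mu_mult[OF ab(1) cd(1)] unfolding t_def by simp
  thus ?thesis unfolding rat_vge_def by simp
qed

abbreviation vge where "vge x n \<equiv> rat_vge p x n"

lemma vge_0[simp]: "vge 0 n" unfolding rat_vge_def by simp
lemma vge_mono: "vge x n \<Longrightarrow> m \<le> n \<Longrightarrow> vge x m" unfolding rat_vge_def by auto
lemma vge_neg[simp]: "vge (-x) n \<longleftrightarrow> vge x n" unfolding rat_vge_def by (simp add: vp_neg)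
lemma vge_diff: "vge x n \<Longrightarrow> vge y n \<Longrightarrow> vge (x - y) n"
  using vge_add[of x n "-y"] by simp
lemma vge_mult: "vge x n \<Longrightarrow> vge y m \<Longrightarrow> vge (x*y) (n+m)"
  unfolding rat_vge_def by (cases "x = 0 \<or> y = 0") (auto simp: vp_mult)
lemma vge_self: "x \<noteq> 0 \<Longrightarrow> vge x (rat_vp p x)" unfolding rat_vge_def by simp
lemma not_vge_self: "x \<noteq> 0 \<Longrightarrow> \<not> vge x (rat_vp p x + 1)" unfolding rat_vge_def by simp

lemma vp_pow: "x \<noteq> 0 \<Longrightarrow> rat_vp p (x^k) = int k * rat_vp p x"
  by (induction k) (auto simp: vp_one vp_mult algebra_simps)

lemma vge_pow: "vge (x^k) (int k * n)" if "vge x n"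
proof (cases "x = 0")
  case True thus ?thesis by (cases k) (auto simp: rat_vge_def vp_one)
next
  case False thus ?thesis using that unfolding rat_vge_def by (auto simp: vp_pow mult_left_mono)
qed

lemma vge_int[simp]: "vge (of_int k) 0"
proof (cases "k = 0")
  case False
  have "rat_vp p (of_int k / of_int 1) = mu k - mu 1" by (rule vp_frac) (use False in auto)
  thus ?thesis unfolding rat_vge_def mu_def by simp
qed simp

lemma vge_nat[simp]: "vge (of_nat k) 0" using vge_int[of "int k"] by simp
lemma vge_one[simp]: "vge 1 0" using vge_int[of 1] by simp

lemma vp_p: "rat_vp p (of_nat p) = 1"
proof -
  have "rat_vp p (of_int (int p) / of_int 1) = mu (int p) - mu 1" by (rule vp_frac) (use pp in auto)
  moreover have "multiplicity (int p) (int p) = 1" using pint by (simp add: multiplicity_prime)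
  ultimately show ?thesis unfolding mu_def by simp
qed

lemma vge_p: "vge (of_nat p) 1" using vp_p unfolding rat_vge_def by simp
lemma p_ne0: "(of_nat p :: rat) \<noteq> 0" using pp by auto

lemma vp_q: assumes "prime q" "q \<noteq> p" shows "rat_vp p (of_nat q) = 0"
proof -
  have "rat_vp p (of_int (int q) / of_int 1) = mu (int q) - mu 1" by (rule vp_frac) (use assms in auto)
  moreover have "\<not> int p dvd int q" using assms pp primes_dvd_imp_eq by auto
  hence "multiplicity (int p) (int q) = 0" by (simp add: not_dvd_imp_multiplicity_0)
  ultimately show ?thesis unfolding mu_def by simp
qed

lemma vp_inv: "x \<noteq> 0 \<Longrightarrow> rat_vp p (inverse x) = - rat_vp p x"
  using vp_mult[of x "inverse x"] vp_one by simp

lemma vge_divide: "vge x n \<Longrightarrow> y \<noteq> 0 \<Longrightarrow> vge (x / y) (n - rat_vp p y)"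
  unfolding rat_vge_def divide_inverse by (cases "x = 0") (auto simp: vp_mult vp_inv)

lemma exact_add: assumes "x \<noteq> 0" "vge y (rat_vp p x + 1)"
  shows "x + y \<noteq> 0 \<and> rat_vp p (x + y) = rat_vp p x"
proof -
  have a: "vge (x+y) (rat_vp p x)" using vge_add[OF vge_self[OF assms(1)] vge_mono[OF assms(2)]] by simp
  show ?thesis
  proof (rule ccontr)
    assume "\<not> ?thesis"
    hence "vge (x+y) (rat_vp p x + 1)" using a unfolding rat_vge_def by auto
    hence "vge ((x+y) - y) (rat_vp p x + 1)" using vge_diff assms(2) by blast
    thus False using not_vge_self[OF assms(1)] by simp
  qed
qed

abbreviation cauchy where "cauchy s \<equiv> padic_cauchy p s"
abbreviation null where "null s \<equiv> padic_null p s"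

lemma null_ev: "null s \<longleftrightarrow> (\<forall>n. \<forall>\<^sub>F m in sequentially. vge (s m) n)"
  unfolding padic_null_def eventually_sequentially by simp

lemma cauchy_bound: assumes "cauchy s" shows "\<exists>B. \<forall>\<^sub>F m in sequentially. vge (s m) B"
proof -
  obtain N where N: "\<forall>m\<ge>N. \<forall>k\<ge>N. vge (s m - s k) 0" using assms unfolding padic_cauchy_def by blast
  define B where "B = (if s N = 0 then 0 else min 0 (rat_vp p (s N)))"
  have B0: "B \<le> 0" unfolding B_def by auto
  have sN: "vge (s N) B" unfolding B_def rat_vge_def by auto
  have "vge (s m) B" if "m \<ge> N" for m
  proof -
    have "vge (s m - s N) B" using N that vge_mono[OF _ B0] by auto
    from vge_add[OF this sN] show ?thesis by simp
  qed
  thus ?thesis unfolding eventually_sequentially by blast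
qed

lemma cauchy_add: assumes "cauchy s" "cauchy t" shows "cauchy (\<lambda>m. s m + t m)"
  unfolding padic_cauchy_def
proof
  fix n
  obtain N1 where N1: "\<forall>m\<ge>N1. \<forall>k\<ge>N1. vge (s m - s k) n" using assms(1) unfolding padic_cauchy_def by blast
  obtain N2 where N2: "\<forall>m\<ge>N2. \<forall>k\<ge>N2. vge (t m - t k) n" using assms(2) unfolding padic_cauchy_def by blast
  have "vge ((s m + t m) - (s k + t k)) n" if "m \<ge> max N1 N2" "k \<ge> max N1 N2" for m k
  proof -
    have "vge ((s m - s k) + (t m - t k)) n" using vge_add N1 N2 that by simp
    thus ?thesis by (simp add: algebra_simps)
  qed
  thus "\<exists>N. \<forall>m\<ge>N. \<forall>k\<ge>N. vge ((s m + t m) - (s k + t k)) n" by blast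
qed

lemma cauchy_neg: assumes "cauchy s" shows "cauchy (\<lambda>m. - s m)"
proof -
  have "vge (-s m - -s k) n \<longleftrightarrow> vge (s m - s k) n" for m k n
    using vge_neg[of "s m - s k" n] by (simp add: algebra_simps)
  thus ?thesis using assms unfolding padic_cauchy_def by simp
qed

lemma cauchy_const: "cauchy (\<lambda>m. c)" unfolding padic_cauchy_def by simp

lemma cauchy_diff: "cauchy s \<Longrightarrow> cauchy t \<Longrightarrow> cauchy (\<lambda>m. s m - t m)"
  using cauchy_add[of s "\<lambda>m. - t m"] cauchy_neg[of t] by simp

lemma cauchy_mult: assumes "cauchy s" "cauchy t" shows "cauchy (\<lambda>m. s m * t m)"
  unfolding padic_cauchy_def
proof
  fix n
  obtain B1 where B1: "\<forall>\<^sub>F m in sequentially. vge (s m) B1" using cauchy_bound assms(1) by blast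
  obtain B2 where B2: "\<forall>\<^sub>F m in sequentially. vge (t m) B2" using cauchy_bound assms(2) by blast
  obtain M1 where M1: "\<forall>m\<ge>M1. vge (s m) B1" using B1 unfolding eventually_sequentially by blast
  obtain M2 where M2: "\<forall>m\<ge>M2. vge (t m) B2" using B2 unfolding eventually_sequentially by blast
  obtain N1 where N1: "\<forall>m\<ge>N1. \<forall>k\<ge>N1. vge (s m - s k) (n - B2)" using assms(1) unfolding padic_cauchy_def by blast
  obtain N2 where N2: "\<forall>m\<ge>N2. \<forall>k\<ge>N2. vge (t m - t k) (n - B1)" using assms(2) unfolding padic_cauchy_def by blast
  define N where "N = max (max M1 M2) (max N1 N2)"
  have "vge (s m * t m - s k * t k) n" if "m \<ge> N" "k \<ge> N" for m k
  proof -
    have a: "vge ((s m - s k) * t m) (n - B2 + B2)" by (rule vge_mult) (use N1 M2 that in \<open>auto simp: N_def\<close>)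
    have b: "vge (s k * (t m - t k)) (B1 + (n - B1))" by (rule vge_mult) (use N2 M1 that in \<open>auto simp: N_def\<close>)
    have "vge ((s m - s k) * t m + s k * (t m - t k)) n" using vge_add[OF _ ] a b by simp
    thus ?thesis by (simp add: algebra_simps)
  qed
  thus "\<exists>N. \<forall>m\<ge>N. \<forall>k\<ge>N. vge (s m * t m - s k * t k) n" by blast
qed

lemma cauchy_pow: "cauchy s \<Longrightarrow> cauchy (\<lambda>m. s m ^ k)"
  by (induction k) (auto simp: cauchy_const intro: cauchy_mult)

lemma null_add: assumes "null s" "null t" shows "null (\<lambda>m. s m + t m)"
  unfolding null_ev
proof
  fix n
  have "\<forall>\<^sub>F m in sequentially. vge (s m) n \<and> vge (t m) n" using assms unfolding null_ev
    by (simp add: eventually_conj)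
  thus "\<forall>\<^sub>F m in sequentially. vge (s m + t m) n" by (rule eventually_mono) (simp add: vge_add)
qed

lemma null_neg: "null (\<lambda>m. - s m) \<longleftrightarrow> null s" unfolding padic_null_def by simp

lemma null_diff: "null s \<Longrightarrow> null t \<Longrightarrow> null (\<lambda>m. s m - t m)"
  using null_add[of s "\<lambda>m. - t m"] null_neg[of t] by simp

lemma null_mult: assumes "null s" "\<forall>\<^sub>F m in sequentially. vge (t m) B" shows "null (\<lambda>m. s m * t m)"
  unfolding null_ev
proof
  fix n
  have "\<forall>\<^sub>F m in sequentially. vge (s m) (n - B) \<and> vge (t m) B" using assms unfolding null_ev
    by (simp add: eventually_conj)
  thus "\<forall>\<^sub>F m in sequentially. vge (s m * t m) n" by (rule eventually_mono) (use vge_mult in fastforce)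
qed

lemma cauchy_exact: assumes "cauchy s" "\<not> null s"
  shows "\<exists>v. \<forall>\<^sub>F m in sequentially. s m \<noteq> 0 \<and> rat_vp p (s m) = v"
proof -
  obtain n0 where n0: "\<forall>N. \<exists>m\<ge>N. \<not> vge (s m) n0" using assms(2) unfolding padic_null_def by blast
  obtain N where N: "\<forall>m\<ge>N. \<forall>k\<ge>N. vge (s m - s k) n0" using assms(1) unfolding padic_cauchy_def by blast
  obtain m where m: "m \<ge> N" "\<not> vge (s m) n0" using n0 by blast
  have sm: "s m \<noteq> 0" "rat_vp p (s m) < n0" using m(2) unfolding rat_vge_def by auto
  have "s k \<noteq> 0 \<and> rat_vp p (s k) = rat_vp p (s m)" if "k \<ge> N" for k
  proof -
    have "vge (s k - s m) (rat_vp p (s m) + 1)" using N that m(1) vge_mono sm(2) by fastforce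
    from exact_add[OF sm(1) this] show ?thesis by simp
  qed
  thus ?thesis unfolding eventually_sequentially by blast
qed

lemma cauchy_inverse: assumes "cauchy s" "\<forall>\<^sub>F m in sequentially. s m \<noteq> 0 \<and> rat_vp p (s m) = v"
  shows "cauchy (\<lambda>m. inverse (s m))"
  unfolding padic_cauchy_def
proof
  fix n
  obtain M where M: "\<forall>m\<ge>M. s m \<noteq> 0 \<and> rat_vp p (s m) = v" using assms(2) unfolding eventually_sequentially by blast
  obtain N where N: "\<forall>m\<ge>N. \<forall>k\<ge>N. vge (s m - s k) (n + 2*v)" using assms(1) unfolding padic_cauchy_def by blast
  have "vge (inverse (s m) - inverse (s k)) n" if "m \<ge> max M N" "k \<ge> max M N" for m k
  proof -
    have nz: "s m \<noteq> 0" "s k \<noteq> 0" and vv: "rat_vp p (s m) = v" "rat_vp p (s k) = v" using M that by auto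
    have "vge ((s k - s m) / (s m * s k)) (n + 2*v - rat_vp p (s m * s k))"
      by (rule vge_divide) (use N that nz in auto)
    moreover have "rat_vp p (s m * s k) = 2 * v" using vp_mult nz vv by simp
    moreover have "inverse (s m) - inverse (s k) = (s k - s m) / (s m * s k)" using nz by (simp add: field_simps)
    ultimately show ?thesis by simp
  qed
  thus "\<exists>N. \<forall>m\<ge>N. \<forall>k\<ge>N. vge (inverse (s m) - inverse (s k)) n" by blast
qed

end


context padic begin
lemma null_zero: "null (\<lambda>m. 0)" unfolding padic_null_def by simp

lemma null_sym: "null (\<lambda>m. s m - t m) \<Longrightarrow> null (\<lambda>m. t m - s m)"
  using null_neg[of "\<lambda>m. s m - t m"] by simp

lemma equiv_rel: "equiv {s. cauchy s} (padic_rel p)"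
proof (rule equivI)
  show "padic_rel p \<subseteq> {s. cauchy s} \<times> {s. cauchy s}" unfolding padic_rel_def by auto
  show "refl_on {s. cauchy s} (padic_rel p)" unfolding refl_on_def padic_rel_def by (auto simp: null_zero)
  show "sym (padic_rel p)" unfolding sym_def padic_rel_def by (auto simp: null_sym)
  have "null (\<lambda>n. s n - u n)" if "null (\<lambda>n. s n - t n)" "null (\<lambda>n. t n - u n)" for s t u
    using null_add[OF that] by simp
  thus "trans (padic_rel p)" unfolding trans_def padic_rel_def by blast
qed

definition cls where "cls s = padic_rel p `` {s}"

lemma Qp_cls: "x \<in> Qp p \<Longrightarrow> \<exists>s. cauchy s \<and> x = cls s"
  unfolding Qp_def cls_def by (auto elim: quotientE)

lemma cls_in: "cauchy s \<Longrightarrow> cls s \<in> Qp p"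
  unfolding Qp_def cls_def by (auto intro: quotientI)

lemma cls_eq: "cauchy s \<Longrightarrow> cauchy t \<Longrightarrow> cls s = cls t \<longleftrightarrow> null (\<lambda>n. s n - t n)"
  unfolding cls_def using eq_equiv_class_iff[OF equiv_rel] unfolding padic_rel_def by auto

lemma mem_cls: "s' \<in> cls s \<longleftrightarrow> cauchy s \<and> cauchy s' \<and> null (\<lambda>n. s n - s' n)"
  unfolding cls_def padic_rel_def by auto

lemma cls_of_rat: "qp_of_rat p r = cls (\<lambda>_. r)" unfolding qp_of_rat_def cls_def ..

lemma union_cls:
  assumes "cauchy s0" "\<And>s. s \<in> S \<Longrightarrow> cauchy s \<and> null (\<lambda>n. s0 n - s n)" "s0 \<in> S"
  shows "\<Union>{padic_rel p `` {s} | s. s \<in> S} = cls s0"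
proof -
  have "padic_rel p `` {s} = cls s0" if "s \<in> S" for s
    using cls_eq[of s0 s] assms that unfolding cls_def by auto
  hence "{padic_rel p `` {s} | s. s \<in> S} = {cls s0}" using assms(3) by blast
  thus ?thesis by simp
qed


lemma union_eq: "(\<And>Y. Y \<in> A \<Longrightarrow> Y = X) \<Longrightarrow> X \<in> A \<Longrightarrow> \<Union>A = X" by blast

lemma cls_eqI: "cauchy s \<Longrightarrow> cauchy t \<Longrightarrow> null (\<lambda>n. s n - t n) \<Longrightarrow> padic_rel p `` {t} = cls s"
  using cls_eq[of s t] unfolding cls_def by simp

lemma self_cls: "cauchy s \<Longrightarrow> s \<in> cls s" using mem_cls null_zero by simp

lemma add_cls: assumes "cauchy s" "cauchy t" shows "qp_add p (cls s) (cls t) = cls (\<lambda>n. s n + t n)"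
  unfolding qp_add_def
proof (rule union_eq)
  fix Y assume "Y \<in> {padic_rel p `` {\<lambda>n. s' n + t' n} | s' t'. s' \<in> cls s \<and> t' \<in> cls t}"
  then obtain s' t' where u: "Y = padic_rel p `` {\<lambda>n. s' n + t' n}" "s' \<in> cls s" "t' \<in> cls t" by blast
  have "null (\<lambda>n. (s n - s' n) + (t n - t' n))" using null_add u mem_cls by blast
  hence "null (\<lambda>n. (s n + t n) - (s' n + t' n))" by (simp add: algebra_simps)
  thus "Y = cls (\<lambda>n. s n + t n)" unfolding u(1)
    by (intro cls_eqI cauchy_add) (use u mem_cls in auto)
next
  show "cls (\<lambda>n. s n + t n) \<in> {padic_rel p `` {\<lambda>n. s' n + t' n} | s' t'. s' \<in> cls s \<and> t' \<in> cls t}"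
    unfolding cls_def[of "\<lambda>n. s n + t n"] using self_cls assms by blast
qed


lemma mult_cls: assumes "cauchy s" "cauchy t" shows "qp_mult p (cls s) (cls t) = cls (\<lambda>n. s n * t n)"
  unfolding qp_mult_def
proof (rule union_eq)
  fix Y assume "Y \<in> {padic_rel p `` {\<lambda>n. s' n * t' n} | s' t'. s' \<in> cls s \<and> t' \<in> cls t}"
  then obtain s' t' where u: "Y = padic_rel p `` {\<lambda>n. s' n * t' n}" "s' \<in> cls s" "t' \<in> cls t" by blast
  obtain B where B: "\<forall>\<^sub>F m in sequentially. vge (t m) B" using cauchy_bound assms by blast
  obtain B' where B': "\<forall>\<^sub>F m in sequentially. vge (s' m) B'" using cauchy_bound u mem_cls by blast
  have "null (\<lambda>n. (s n - s' n) * t n + s' n * (t n - t' n))"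
  proof (rule null_add)
    show "null (\<lambda>n. (s n - s' n) * t n)" using null_mult[OF _ B] u mem_cls by blast
    have "null (\<lambda>n. (t n - t' n) * s' n)" using null_mult[OF _ B'] u mem_cls by blast
    thus "null (\<lambda>n. s' n * (t n - t' n))" by (simp add: mult.commute)
  qed
  hence "null (\<lambda>n. (s n * t n) - (s' n * t' n))" by (simp add: algebra_simps)
  thus "Y = cls (\<lambda>n. s n * t n)" unfolding u(1)
    by (intro cls_eqI cauchy_mult) (use u mem_cls in auto)
next
  show "cls (\<lambda>n. s n * t n) \<in> {padic_rel p `` {\<lambda>n. s' n * t' n} | s' t'. s' \<in> cls s \<and> t' \<in> cls t}"
    unfolding cls_def[of "\<lambda>n. s n * t n"] using self_cls assms by blast
qed

lemma neg_cls: assumes "cauchy s" shows "qp_neg p (cls s) = cls (\<lambda>n. - s n)"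
  unfolding qp_neg_def
proof (rule union_eq)
  fix Y assume "Y \<in> {padic_rel p `` {\<lambda>n. - s' n} | s'. s' \<in> cls s}"
  then obtain s' where u: "Y = padic_rel p `` {\<lambda>n. - s' n}" "s' \<in> cls s" by blast
  have n1: "null (\<lambda>n. s n - s' n)" using u(2) mem_cls by blast
  have "(\<lambda>n. (- s n) - (- s' n)) = (\<lambda>n. - (s n - s' n))" by (simp add: fun_eq_iff)
  hence "null (\<lambda>n. (- s n) - (- s' n))" using null_neg[of "\<lambda>n. s n - s' n"] n1 by simp
  thus "Y = cls (\<lambda>n. - s n)" unfolding u(1)
    by (intro cls_eqI cauchy_neg) (use u mem_cls in auto)
next
  show "cls (\<lambda>n. - s n) \<in> {padic_rel p `` {\<lambda>n. - s' n} | s'. s' \<in> cls s}"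
    unfolding cls_def[of "\<lambda>n. - s n"] using self_cls assms by blast
qed

lemma pow_cls: assumes "cauchy s" shows "qp_pow p (cls s) k = cls (\<lambda>n. s n ^ k)"
proof (induction k)
  case 0 show ?case unfolding qp_pow_def by (simp add: cls_of_rat)
next
  case (Suc k)
  have "qp_pow p (cls s) (Suc k) = qp_mult p (cls s) (qp_pow p (cls s) k)" unfolding qp_pow_def funpow.simps o_apply ..
  also have "\<dots> = cls (\<lambda>n. s n * s n ^ k)" unfolding Suc using mult_cls assms cauchy_pow by blast
  finally show ?case by simp
qed


lemma ev_ex: "\<forall>\<^sub>F m in sequentially. P m \<Longrightarrow> \<exists>m. P m"
  by (auto simp: eventually_sequentially)

lemma val_cls: assumes "cauchy s"
  shows "ereal (of_int n) \<le> qp_val p (cls s) \<longleftrightarrow> (\<forall>\<^sub>F m in sequentially. vge (s m) n)"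
proof (cases "null s")
  case True
  have "cls s = qp_of_rat p 0" unfolding cls_of_rat using cls_eq[OF assms cauchy_const] True by simp
  hence "qp_val p (cls s) = \<infinity>" unfolding qp_val_def by simp
  thus ?thesis using True unfolding null_ev by simp
next
  case False
  obtain v where v: "\<forall>\<^sub>F m in sequentially. s m \<noteq> 0 \<and> rat_vp p (s m) = v"
    using cauchy_exact[OF assms False] by blast
  have ne: "cls s \<noteq> qp_of_rat p 0" unfolding cls_of_rat using cls_eq[OF assms cauchy_const] False by simp
  have the: "(THE w. \<exists>s'\<in>cls s. \<exists>N. \<forall>n\<ge>N. s' n \<noteq> 0 \<and> rat_vp p (s' n) = w) = v"
  proof (rule the_equality)
    show "\<exists>s'\<in>cls s. \<exists>N. \<forall>n\<ge>N. s' n \<noteq> 0 \<and> rat_vp p (s' n) = v"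
      using self_cls[OF assms] v unfolding eventually_sequentially by blast
  next
    fix w assume "\<exists>s'\<in>cls s. \<exists>N. \<forall>n\<ge>N. s' n \<noteq> 0 \<and> rat_vp p (s' n) = w"
    then obtain s' N where s': "s' \<in> cls s" "\<forall>n\<ge>N. s' n \<noteq> 0 \<and> rat_vp p (s' n) = w" by blast
    have "null (\<lambda>n. s n - s' n)" using s'(1) mem_cls by blast
    hence e1: "\<forall>\<^sub>F m in sequentially. vge (s m - s' m) (v+1)" unfolding null_ev by blast
    have e2: "\<forall>\<^sub>F m in sequentially. s' m \<noteq> 0 \<and> rat_vp p (s' m) = w"
      using s'(2) unfolding eventually_sequentially by blast
    have "\<forall>\<^sub>F m in sequentially. vge (s m - s' m) (v+1) \<and> s' m \<noteq> 0 \<and> rat_vp p (s' m) = w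
       \<and> s m \<noteq> 0 \<and> rat_vp p (s m) = v" using eventually_conj[OF e1 eventually_conj[OF e2 v]] by simp
    then obtain m where m: "vge (s m - s' m) (v+1)" "s' m \<noteq> 0" "rat_vp p (s' m) = w" "s m \<noteq> 0" "rat_vp p (s m) = v"
      using ev_ex by blast
    have "vge (s' m - s m) (rat_vp p (s m) + 1)" using m(1,5) vge_neg[of "s m - s' m" "v+1"] by (simp only: minus_diff_eq)
    from exact_add[OF m(4) this] show "w = v" using m by simp
  qed
  have val: "qp_val p (cls s) = ereal (of_int v)" unfolding qp_val_def the using ne by simp
  show ?thesis
  proof
    assume "ereal (of_int n) \<le> qp_val p (cls s)"
    hence "n \<le> v" unfolding val by simp
    show "\<forall>\<^sub>F m in sequentially. vge (s m) n"
      using v by (rule eventually_mono) (use \<open>n \<le> v\<close> in \<open>auto simp: rat_vge_def\<close>)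
  next
    assume "\<forall>\<^sub>F m in sequentially. vge (s m) n"
    with v have "\<forall>\<^sub>F m in sequentially. vge (s m) n \<and> s m \<noteq> 0 \<and> rat_vp p (s m) = v" by (simp add: eventually_conj)
    then obtain m where "vge (s m) n" "s m \<noteq> 0" "rat_vp p (s m) = v" using ev_ex by blast
    hence "n \<le> v" unfolding rat_vge_def by simp
    thus "ereal (of_int n) \<le> qp_val p (cls s)" unfolding val by simp
  qed
qed

end

lemma ereal_le_int: fixes A B :: ereal
  assumes "A = \<infinity> \<or> (\<exists>k::int. A = ereal (of_int k))"
    "\<forall>n::int. ereal (of_int n) \<le> A \<longrightarrow> ereal (of_int n) \<le> B"
  shows "A \<le> B"
proof (cases "A = \<infinity>")
  case True
  have "B = \<infinity>"
  proof (rule ccontr)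
    assume "B \<noteq> \<infinity>"
    then obtain r where r: "B \<le> ereal r" by (cases B) auto
    have "ereal (of_int n) \<le> B" for n using assms(2) True by simp
    hence "ereal (of_int (\<lceil>r\<rceil> + 1)) \<le> B" .
    with r have "of_int (\<lceil>r\<rceil> + 1) \<le> r" by (metis ereal_less_eq(3) order_trans)
    thus False by linarith
  qed
  thus ?thesis by simp
next
  case False
  then obtain k :: int where "A = ereal (of_int k)" using assms(1) by blast
  thus ?thesis using assms(2) by simp
qed

lemma qp_val_form: "qp_val p x = \<infinity> \<or> (\<exists>k::int. qp_val p x = ereal (of_int k))"
  unfolding qp_val_def by auto


context padic begin

lemma vge_eq: "vge x n \<Longrightarrow> n = m \<Longrightarrow> vge x m" by simp

lemma vge_powdiff: assumes "vge r m" "vge r' m" "vge (r' - r) K"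
  shows "vge (r'^(Suc i) - r^(Suc i)) (K + int i * m)"
proof (induction i)
  case 0 thus ?case using assms by simp
next
  case (Suc i)
  have a: "vge (r' * (r'^(Suc i) - r^(Suc i))) (m + (K + int i * m))" by (rule vge_mult) (use assms Suc in auto)
  have b: "vge (r^(Suc i) * (r' - r)) (int (Suc i) * m + K)" by (rule vge_mult[OF vge_pow[OF assms(1)] assms(3)])
  have "vge (r' * (r'^(Suc i) - r^(Suc i)) + r^(Suc i) * (r' - r)) (K + int (Suc i) * m)"
    by (rule vge_add[OF vge_eq[OF a] vge_eq[OF b]]) (simp_all add: algebra_simps)
  thus ?case by (simp add: algebra_simps)
qed

lemma powdiff_factor: assumes "vge r m" "vge (r' - r) (m+1)"
  shows "\<exists>E. vge E (int i * m + 1) \<and> r'^(Suc i) - r^(Suc i) = (r' - r) * (of_nat (Suc i) * r^i + E)"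
proof (induction i)
  case 0 show ?case by (rule exI[of _ 0]) simp
next
  case (Suc i)
  then obtain E where E: "vge E (int i * m + 1)" "r'^(Suc i) - r^(Suc i) = (r' - r) * (of_nat (Suc i) * r^i + E)" by blast
  have r': "vge r' m" using vge_add[OF assms(1) vge_mono[OF assms(2)]] by simp
  define E' where "E' = of_nat (Suc i) * r^i * (r' - r) + r' * E"
  have a: "vge (of_nat (Suc i) * r^i * (r' - r)) (0 + int i * m + (m+1))"
    by (rule vge_mult[OF vge_mult[OF vge_nat vge_pow[OF assms(1)]] assms(2)])
  have b: "vge (r' * E) (m + (int i * m + 1))" by (intro vge_mult) (use r' E in auto)
  have "vge E' (int (Suc i) * m + 1)" unfolding E'_def
    by (rule vge_add[OF vge_eq[OF a] vge_eq[OF b]]) (simp_all add: algebra_simps)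
  moreover have "r'^(Suc (Suc i)) - r^(Suc (Suc i)) = (r' - r) * (of_nat (Suc (Suc i)) * r^(Suc i) + E')"
  proof -
    have "r'^(Suc (Suc i)) - r^(Suc (Suc i)) = r' * (r'^(Suc i) - r^(Suc i)) + r^(Suc i) * (r' - r)"
      by (simp add: algebra_simps)
    also have "\<dots> = r' * ((r' - r) * (of_nat (Suc i) * r^i + E)) + r^(Suc i) * (r' - r)" using E by simp
    also have "\<dots> = (r' - r) * (of_nat (Suc (Suc i)) * r^(Suc i) + E')"
      unfolding E'_def by (simp add: algebra_simps)
    finally show ?thesis .
  qed
  ultimately show ?case by blast
qed

lemma root_unique: assumes "r \<noteq> 0" "rat_vp p r = m" "vge (r' - r) (m+1)" "vge (r'^q - r^q) K"
  "rat_vp p (of_nat q) = 0" "q \<ge> 1"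
  shows "vge (r' - r) (K - int (q - 1) * m)"
proof -
  obtain i where q: "q = Suc i" using assms(6) by (cases q) auto
  obtain E where E: "vge E (int i * m + 1)" "r'^(Suc i) - r^(Suc i) = (r' - r) * (of_nat (Suc i) * r^i + E)"
    using powdiff_factor[of r m r' i] assms vge_self by blast
  have qz: "(of_nat q :: rat) \<noteq> 0" using q by simp
  have v1: "rat_vp p (of_nat (Suc i) * r^i) = int i * m"
    using vp_mult[OF qz] assms vp_pow q by simp
  have nz: "of_nat (Suc i) * r^i \<noteq> 0" using qz assms(1) q by simp
  have "vge E (rat_vp p (of_nat (Suc i) * r^i) + 1)" using E v1 by simp
  from exact_add[OF nz this] v1 have S: "of_nat (Suc i) * r^i + E \<noteq> 0" "rat_vp p (of_nat (Suc i) * r^i + E) = int i * m"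
    by auto
  show ?thesis
  proof (cases "r' = r")
    case False
    have "vge ((r' - r) * (of_nat (Suc i) * r^i + E)) K" using assms(4) E(2) q by simp
    hence "K \<le> rat_vp p (r' - r) + int i * m" using False S vp_mult unfolding rat_vge_def by auto
    thus ?thesis using q unfolding rat_vge_def by simp
  qed simp
qed

lemma binom_expand: assumes "vge r 0" "vge d 0"
  shows "\<exists>E. vge E 0 \<and> (r + d)^(Suc i) = r^(Suc i) + of_nat (Suc i) * r^i * d + d^2 * E"
proof (induction i)
  case 0 show ?case by (rule exI[of _ 0]) simp
next
  case (Suc i)
  then obtain E where E: "vge E 0" "(r + d)^(Suc i) = r^(Suc i) + of_nat (Suc i) * r^i * d + d^2 * E" by blast
  define E' where "E' = r * E + of_nat (Suc i) * r^i + d * E"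
  have "vge (r * E) 0" using vge_mult[OF assms(1) E(1)] by simp
  moreover have "vge (of_nat (Suc i) * r^i) (0 + int i * 0)" by (rule vge_mult[OF vge_nat vge_pow[OF assms(1)]])
  moreover have "vge (d * E) 0" using vge_mult[OF assms(2) E(1)] by simp
  ultimately have "vge E' 0" unfolding E'_def using vge_add by simp
  moreover have "(r + d)^(Suc (Suc i)) = r^(Suc (Suc i)) + of_nat (Suc (Suc i)) * r^(Suc i) * d + d^2 * E'"
  proof -
    have "(r + d)^(Suc (Suc i)) = (r + d) * (r + d)^(Suc i)" by simp
    also have "\<dots> = (r + d) * (r^(Suc i) + of_nat (Suc i) * r^i * d + d^2 * E)" using E by simp
    also have "\<dots> = r^(Suc (Suc i)) + of_nat (Suc (Suc i)) * r^(Suc i) * d + d^2 * E'"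
      unfolding E'_def by (simp add: algebra_simps power2_eq_square)
    finally show ?thesis .
  qed
  ultimately show ?case by blast
qed

lemma vge_r0: "vge (r - 1) 1 \<Longrightarrow> vge r 0"
  using vge_add[OF vge_mono[of "r - 1" 1 0] vge_one] by simp

lemma one_pow: "vge (r - 1) 1 \<Longrightarrow> vge (r^i - 1) 1"
proof (induction i)
  case (Suc i)
  have r0: "vge r 0" using vge_r0 Suc.prems by blast
  have "vge (r * (r^i - 1) + (r - 1)) (0 + 1)" using vge_add vge_mult[OF r0 Suc.IH[OF Suc.prems]] Suc.prems by simp
  thus ?case by (simp add: algebra_simps)
qed simp

lemma root_approx: assumes "vge (X - 1) 1" "rat_vp p (of_nat q) = 0" "q \<ge> 1"
  shows "\<exists>r. vge (r - 1) 1 \<and> vge (r^q - X) (int k + 1)"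
proof (induction k)
  case 0
  have "vge (1 - X) 1" using vge_neg[of "X - 1" 1] assms(1) by (simp only: minus_diff_eq)
  thus ?case by (intro exI[of _ 1]) (simp add: algebra_simps)
next
  case (Suc k)
  then obtain r where r: "vge (r - 1) 1" "vge (r^q - X) (int k + 1)" by blast
  obtain i where q: "q = Suc i" using assms(3) by (cases q) auto
  have qz: "(of_nat q :: rat) \<noteq> 0" using q by simp
  define d where "d = (r^q - X) / of_nat q"
  have d: "vge d (int k + 1)" unfolding d_def using vge_divide[OF r(2) qz] assms(2) by simp
  have r0: "vge r 0" using vge_r0 r(1) by blast
  have d0: "vge (- d) 0" using vge_mono[OF d] by simp
  obtain E where E: "vge E 0" "(r + - d)^(Suc i) = r^(Suc i) + of_nat (Suc i) * r^i * (- d) + (- d)^2 * E"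
    using binom_expand[OF r0 d0] by blast
  have qd: "of_nat q * d = r^q - X" unfolding d_def using qz by simp
  have eq: "(r - d)^q - X = (r^q - X) * (- (r^i - 1)) + d^2 * E"
  proof -
    have "(r - d)^q - X = r^(Suc i) + of_nat (Suc i) * r^i * (- d) + (- d)^2 * E - X" using E q by simp
    also have "\<dots> = r^q - X - r^i * (of_nat q * d) + d^2 * E" using q by (simp add: algebra_simps)
    also have "\<dots> = (r^q - X) * (- (r^i - 1)) + d^2 * E" unfolding qd by (simp add: algebra_simps)
    finally show ?thesis .
  qed
  have "vge (- (r^i - 1)) 1" using one_pow[OF r(1)] by (simp only: vge_neg)
  from vge_mult[OF r(2) this] have "vge ((r^q - X) * (- (r^i - 1))) (int k + 1 + 1)" .
  moreover have "vge (d^2 * E) ((int k + 1) + (int k + 1) + 0)"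
    using vge_mult[OF vge_mult[OF d d] E(1)] by (simp add: power2_eq_square)
  ultimately have "vge ((r - d)^q - X) (int (Suc k) + 1)" unfolding eq
    using vge_add[OF _ vge_mono] by fastforce
  moreover have "vge ((r - d) - 1) 1" using vge_diff[OF r(1) vge_mono[OF d]] by (simp add: algebra_simps)
  ultimately show ?case by blast
qed

end

locale padic_q = padic + fixes q :: nat assumes qq: "prime q" "q \<noteq> p"
begin

lemma vpq: "rat_vp p (of_nat q) = 0" using vp_q qq by blast
lemma q2: "q \<ge> 2" using qq prime_ge_2_nat by blast

lemma null_pow: assumes "null s" shows "null (\<lambda>k. s k ^ q)"
  unfolding null_ev
proof
  fix n
  have "\<forall>\<^sub>F k in sequentially. vge (s k) (max n 0)" using assms unfolding null_ev by blast
  thus "\<forall>\<^sub>F k in sequentially. vge (s k ^ q) n"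
  proof (rule eventually_mono)
    fix k assume "vge (s k) (max n 0)"
    hence "vge (s k ^ q) (int q * max n 0)" by (rule vge_pow)
    moreover have "1 * max n 0 \<le> int q * max n 0" by (rule mult_right_mono) (use q2 in auto)
    hence "n \<le> int q * max n 0" by linarith
    ultimately show "vge (s k ^ q) n" using vge_mono by blast
  qed
qed


lemma root_seq:
  assumes a: "cauchy a" and b: "cauchy b"
    and ab: "\<forall>n. (\<forall>\<^sub>F k in sequentially. vge (b k) n) \<longrightarrow> (\<forall>\<^sub>F k in sequentially. vge (a k) n)"
  shows "\<exists>c. cauchy c \<and> null (\<lambda>k. c k ^ q - (b k ^ q + of_nat p * a k ^ q)) \<and>
     (\<forall>n. (\<forall>\<^sub>F k in sequentially. vge (b k) n) \<longrightarrow> (\<forall>\<^sub>F k in sequentially. vge (c k - b k) (n+1)))"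
proof (cases "null b")
  case True
  have an: "null a" using ab True unfolding null_ev by blast
  have "null (\<lambda>k. b k ^ q + of_nat p * a k ^ q)"
  proof (rule null_add)
    show "null (\<lambda>k. b k ^ q)" using null_pow True by blast
    have "null (\<lambda>k. a k ^ q * of_nat p)" by (rule null_mult[of _ _ 0]) (use null_pow an in auto)
    thus "null (\<lambda>k. of_nat p * a k ^ q)" by (simp add: mult.commute)
  qed
  hence n1: "null (\<lambda>k. - (b k ^ q + of_nat p * a k ^ q))" using null_neg[of "\<lambda>k. b k ^ q + of_nat p * a k ^ q"] by simp
  have e1: "(\<lambda>k. (0::rat) ^ q - (b k ^ q + of_nat p * a k ^ q)) = (\<lambda>k. - (b k ^ q + of_nat p * a k ^ q))"
    using q2 by (simp add: fun_eq_iff)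
  have "null (\<lambda>k. 0 ^ q - (b k ^ q + of_nat p * a k ^ q))" unfolding e1 by (rule n1)
  moreover have "\<forall>\<^sub>F k in sequentially. vge (0 - b k) (n+1)" for n using True unfolding null_ev by simp
  ultimately show ?thesis using cauchy_const[of 0] by (intro exI[of _ "\<lambda>_. 0"]) auto
next
  case False
  obtain m where m: "\<forall>\<^sub>F k in sequentially. b k \<noteq> 0 \<and> rat_vp p (b k) = m" using cauchy_exact[OF b False] by blast
  have bm: "\<forall>\<^sub>F k in sequentially. vge (b k) m" using m by (rule eventually_mono) (simp add: rat_vge_def)
  have am: "\<forall>\<^sub>F k in sequentially. vge (a k) m" using ab bm by blast
  define u where "u k = a k * inverse (b k)" for k
  define X where "X k = 1 + of_nat p * u k ^ q" for k
  have Xc: "cauchy X" unfolding X_def u_def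
    by (intro cauchy_add cauchy_const cauchy_mult cauchy_pow cauchy_inverse[OF b m] a)
  have ev1: "\<forall>\<^sub>F k in sequentially. b k \<noteq> 0 \<and> rat_vp p (b k) = m \<and> vge (X k - 1) 1"
    using eventually_conj[OF m am]
  proof (rule eventually_mono)
    fix k assume k: "(b k \<noteq> 0 \<and> rat_vp p (b k) = m) \<and> vge (a k) m"
    have "vge (a k / b k) (m - rat_vp p (b k))" by (rule vge_divide) (use k in auto)
    hence "vge (u k) 0" using k unfolding u_def by (simp add: divide_inverse)
    hence "vge (u k ^ q) (int q * 0)" by (rule vge_pow)
    hence "vge (of_nat p * u k ^ q) (1 + int q * 0)" by (rule vge_mult[OF vge_p])
    thus "b k \<noteq> 0 \<and> rat_vp p (b k) = m \<and> vge (X k - 1) 1" using k unfolding X_def by simp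
  qed
  define R where "R k = (SOME r. vge (r - 1) 1 \<and> vge (r^q - X k) (int k + 1))" for k
  have Rp: "vge (R k - 1) 1 \<and> vge (R k ^ q - X k) (int k + 1)" if "vge (X k - 1) 1" for k
    unfolding R_def by (rule someI_ex) (rule root_approx[OF that vpq], use q2 in auto)
  have ev2: "\<forall>\<^sub>F k in sequentially. b k \<noteq> 0 \<and> rat_vp p (b k) = m \<and> vge (R k - 1) 1 \<and> vge (R k ^ q - X k) (int k + 1)"
    using ev1 by (rule eventually_mono) (use Rp in auto)
  obtain M where M: "\<And>k. k \<ge> M \<Longrightarrow> b k \<noteq> 0 \<and> rat_vp p (b k) = m \<and> vge (R k - 1) 1 \<and> vge (R k ^ q - X k) (int k + 1)"
    using ev2 unfolding eventually_sequentially by blast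
  define c where "c k = b k * R k" for k
  have cc: "cauchy c" unfolding padic_cauchy_def
  proof
    fix n
    obtain N1 where N1: "\<forall>k\<ge>N1. \<forall>l\<ge>N1. vge (b k - b l) n" using b unfolding padic_cauchy_def by blast
    obtain N2 where N2: "\<forall>k\<ge>N2. \<forall>l\<ge>N2. vge (X k - X l) (n - m)" using Xc unfolding padic_cauchy_def by blast
    define N where "N = max (max M N1) (max N2 (nat (n - m)))"
    have "vge (c k - c l) n" if kl: "k \<ge> N" "l \<ge> N" for k l
    proof -
      have Mk: "b k \<noteq> 0 \<and> rat_vp p (b k) = m \<and> vge (R k - 1) 1 \<and> vge (R k ^ q - X k) (int k + 1)"
        using M kl unfolding N_def by auto
      have Ml: "b l \<noteq> 0 \<and> rat_vp p (b l) = m \<and> vge (R l - 1) 1 \<and> vge (R l ^ q - X l) (int l + 1)"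
        using M kl unfolding N_def by auto
      have Rk0: "vge (R k) 0" using vge_r0 Mk by blast
      have t1: "vge ((b k - b l) * R k) (n + 0)" by (rule vge_mult) (use N1 kl Rk0 in \<open>auto simp: N_def\<close>)
      have Rl: "R l \<noteq> 0 \<and> rat_vp p (R l) = 0" using exact_add[of 1 "R l - 1"] Ml vp_one by simp
      have Rkl: "vge (R k - R l) (0 + 1)" using vge_diff[of "R k - 1" 1 "R l - 1"] Mk Ml by simp
      have kk: "n - m \<le> int k + 1" "n - m \<le> int l + 1" using kl unfolding N_def by auto
      have "vge ((R k ^ q - X k) + (X k - X l) - (R l ^ q - X l)) (n - m)"
      proof (rule vge_diff[OF vge_add])
        show "vge (R k ^ q - X k) (n - m)" using vge_mono Mk kk by blast
        show "vge (X k - X l) (n - m)" using N2 kl unfolding N_def by auto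
        show "vge (R l ^ q - X l) (n - m)" using vge_mono Ml kk by blast
      qed
      hence "vge (R k ^ q - R l ^ q) (n - m)" by simp
      from root_unique[OF conjunct1[OF Rl] conjunct2[OF Rl] Rkl this vpq] q2
      have "vge (R k - R l) (n - m)" by simp
      from vge_mult[OF vge_self[OF conjunct1[OF Ml]] this]
      have t2: "vge (b l * (R k - R l)) (m + (n - m))" using Ml by simp
      have "vge ((b k - b l) * R k + b l * (R k - R l)) n" using vge_add t1 t2 by simp
      thus ?thesis unfolding c_def by (simp add: algebra_simps)
    qed
    thus "\<exists>N. \<forall>k\<ge>N. \<forall>l\<ge>N. vge (c k - c l) n" by blast
  qed
  have cn: "null (\<lambda>k. c k ^ q - (b k ^ q + of_nat p * a k ^ q))"
    unfolding padic_null_def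
  proof
    fix n
    have "vge (c k ^ q - (b k ^ q + of_nat p * a k ^ q)) n" if k: "k \<ge> max M (nat (n - int q * m))" for k
    proof -
      have Mk: "b k \<noteq> 0 \<and> rat_vp p (b k) = m \<and> vge (R k - 1) 1 \<and> vge (R k ^ q - X k) (int k + 1)"
        using M k by auto
      have "b k * u k = a k" using Mk by (simp add: u_def)
      hence bu: "b k ^ q * u k ^ q = a k ^ q" by (metis power_mult_distrib)
      have bX: "b k ^ q * X k = b k ^ q + of_nat p * a k ^ q"
        unfolding X_def by (simp add: algebra_simps bu)
      have eq: "c k ^ q - (b k ^ q + of_nat p * a k ^ q) = b k ^ q * (R k ^ q - X k)"
        unfolding bX[symmetric] c_def by (simp add: algebra_simps power_mult_distrib)
      have "vge (b k ^ q * (R k ^ q - X k)) (int q * m + (int k + 1))"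
        by (rule vge_mult[OF vge_pow]) (use Mk vge_self in auto)
      moreover have "n \<le> int q * m + (int k + 1)" using k by auto
      ultimately show ?thesis unfolding eq using vge_mono by blast
    qed
    thus "\<exists>N. \<forall>k\<ge>N. vge (c k ^ q - (b k ^ q + of_nat p * a k ^ q)) n" by blast
  qed
  have "\<forall>\<^sub>F k in sequentially. vge (c k - b k) (n+1)" if evb: "\<forall>\<^sub>F k in sequentially. vge (b k) n" for n
  proof -
    obtain k where k: "vge (b k) n" "b k \<noteq> 0" "rat_vp p (b k) = m"
      using ev_ex[OF eventually_conj[OF evb m]] by blast
    have nm: "n \<le> m" using k unfolding rat_vge_def by simp
    have "vge (c k - b k) (n+1)" if "k \<ge> M" for k
    proof -
      have Mk: "b k \<noteq> 0 \<and> rat_vp p (b k) = m \<and> vge (R k - 1) 1" using M that by auto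
      have "vge (b k * (R k - 1)) (m + 1)" by (rule vge_mult) (use Mk vge_self in auto)
      hence "vge (b k * (R k - 1)) (n + 1)" by (rule vge_mono) (use nm in simp)
      thus ?thesis unfolding c_def by (simp add: algebra_simps)
    qed
    thus ?thesis unfolding eventually_sequentially by blast
  qed
  thus ?thesis using cc cn by blast
qed


lemma root_vge: assumes "vge (x^q) (int q * K)" shows "vge x K"
proof (cases "x = 0")
  case False
  have "int q * K \<le> int q * rat_vp p x" using assms False vp_pow unfolding rat_vge_def by auto
  hence "K \<le> rat_vp p x" using q2 by simp
  thus ?thesis unfolding rat_vge_def by simp
qed simp

lemma back_seq: assumes a: "cauchy a" and N: "null (\<lambda>k. c k ^ q - (b k ^ q + of_nat p * a k ^ q))"
  and bn: "\<forall>\<^sub>F k in sequentially. vge (b k) n"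
  shows "\<forall>\<^sub>F k in sequentially. vge (a k) n"
proof (rule ccontr)
  assume na: "\<not> ?thesis"
  hence "\<not> null a" unfolding null_ev by blast
  then obtain v where v: "\<forall>\<^sub>F k in sequentially. a k \<noteq> 0 \<and> rat_vp p (a k) = v" using cauchy_exact a by blast
  have vn: "v < n"
  proof (rule ccontr)
    assume "\<not> v < n"
    have "\<forall>\<^sub>F k in sequentially. vge (a k) n" using v by (rule eventually_mono) (use \<open>\<not> v < n\<close> in \<open>auto simp: rat_vge_def\<close>)
    thus False using na by blast
  qed
  have N2: "\<forall>\<^sub>F k in sequentially. vge (c k ^ q - (b k ^ q + of_nat p * a k ^ q)) (int q * v + 2)" using N unfolding null_ev by blast
  obtain k where k: "a k \<noteq> 0" "rat_vp p (a k) = v" "vge (b k) n" "vge (c k ^ q - (b k ^ q + of_nat p * a k ^ q)) (int q * v + 2)"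
    using ev_ex[OF eventually_conj[OF v eventually_conj[OF bn N2]]] by blast
  define x where "x = of_nat p * a k ^ q"
  have xn: "x \<noteq> 0" unfolding x_def using k p_ne0 by simp
  have xv: "rat_vp p x = int q * v + 1" unfolding x_def using vp_mult[OF p_ne0] vp_pow k vp_p by simp
  have "vge (b k ^ q) (int q * n)" using vge_pow k by blast
  moreover have "int q * v + 2 \<le> int q * n"
  proof -
    have "int q * (v + 1) \<le> int q * n" using vn by (simp add: mult_left_mono)
    thus ?thesis using q2 by (simp add: algebra_simps)
  qed
  ultimately have bq: "vge (b k ^ q) (int q * v + 2)" using vge_mono by blast
  have "vge (b k ^ q + (c k ^ q - (b k ^ q + of_nat p * a k ^ q))) (rat_vp p x + 1)"
    using vge_add[OF bq k(4)] xv by (simp add: add.commute)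
  from exact_add[OF xn this] have cq: "c k ^ q \<noteq> 0" "rat_vp p (c k ^ q) = int q * v + 1"
    using xv unfolding x_def by (simp_all add: algebra_simps)
  have cn: "c k \<noteq> 0" using cq q2 by auto
  have "int q * rat_vp p (c k) = int q * v + 1" using cq vp_pow[OF cn] by simp
  hence "int q * (rat_vp p (c k) - v) = 1" by (simp add: algebra_simps)
  hence "int q = 1" using q2 pos_zmult_eq_1_iff[of "int q"] by simp
  thus False using q2 by simp
qed

lemma small_seq: assumes "K \<ge> 0" "\<forall>\<^sub>F k in sequentially. vge (a k) K" "\<forall>\<^sub>F k in sequentially. vge (b k) K"
  "null (\<lambda>k. c k ^ q - (b k ^ q + of_nat p * a k ^ q))"
  shows "\<forall>\<^sub>F k in sequentially. vge (c k) K"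
proof -
  have N2: "\<forall>\<^sub>F k in sequentially. vge (c k ^ q - (b k ^ q + of_nat p * a k ^ q)) (int q * K)"
    using assms(4) unfolding null_ev by blast
  show ?thesis using eventually_conj[OF assms(2) eventually_conj[OF assms(3) N2]]
  proof (rule eventually_mono)
    fix k assume k: "vge (a k) K \<and> vge (b k) K \<and> vge (c k ^ q - (b k ^ q + of_nat p * a k ^ q)) (int q * K)"
    have t1: "vge (b k ^ q) (int q * K)" using vge_pow k by blast
    have "vge (of_nat p * a k ^ q) (1 + int q * K)" using vge_mult[OF vge_p vge_pow] k by blast
    hence t2: "vge (of_nat p * a k ^ q) (int q * K)" using vge_mono by fastforce
    have "vge ((c k ^ q - (b k ^ q + of_nat p * a k ^ q)) + b k ^ q + of_nat p * a k ^ q) (int q * K)"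
      using vge_add[OF vge_add[OF _ t1] t2] k by blast
    hence "vge (c k ^ q) (int q * K)" by simp
    thus "vge (c k) K" by (rule root_vge)
  qed
qed

lemma cont_seq: assumes m: "\<forall>\<^sub>F k in sequentially. b0 k \<noteq> 0 \<and> rat_vp p (b0 k) = m"
  and h1: "\<forall>\<^sub>F k in sequentially. vge (b k - b0 k) K"
  and h2: "\<forall>\<^sub>F k in sequentially. vge (a k - a0 k) K" and K: "K \<ge> m+1"
  and h3: "\<forall>\<^sub>F k in sequentially. vge (a k) m" and h4: "\<forall>\<^sub>F k in sequentially. vge (a0 k) m"
  and h5: "\<forall>\<^sub>F k in sequentially. vge (c k - b k) (m+1)" and h6: "\<forall>\<^sub>F k in sequentially. vge (c0 k - b0 k) (m+1)"
  and n1: "null (\<lambda>k. c k ^ q - (b k ^ q + of_nat p * a k ^ q))"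
  and n0: "null (\<lambda>k. c0 k ^ q - (b0 k ^ q + of_nat p * a0 k ^ q))"
  shows "\<forall>\<^sub>F k in sequentially. vge (c k - c0 k) K"
proof -
  obtain i where q: "q = Suc i" using q2 by (cases q) auto
  define L where "L = K + int i * m"
  have h7: "\<forall>\<^sub>F k in sequentially. vge (c k ^ q - (b k ^ q + of_nat p * a k ^ q)) L" using n1 unfolding null_ev by blast
  have h8: "\<forall>\<^sub>F k in sequentially. vge (c0 k ^ q - (b0 k ^ q + of_nat p * a0 k ^ q)) L" using n0 unfolding null_ev by blast
  show ?thesis
    using eventually_conj[OF m eventually_conj[OF h1 eventually_conj[OF h2 eventually_conj[OF h3
          eventually_conj[OF h4 eventually_conj[OF h5 eventually_conj[OF h6 eventually_conj[OF h7 h8]]]]]]]]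
  proof (rule eventually_mono)
    fix k assume "(b0 k \<noteq> 0 \<and> rat_vp p (b0 k) = m) \<and> vge (b k - b0 k) K \<and> vge (a k - a0 k) K \<and> vge (a k) m \<and>
      vge (a0 k) m \<and> vge (c k - b k) (m+1) \<and> vge (c0 k - b0 k) (m+1) \<and>
      vge (c k ^ q - (b k ^ q + of_nat p * a k ^ q)) L \<and> vge (c0 k ^ q - (b0 k ^ q + of_nat p * a0 k ^ q)) L"
    hence k: "b0 k \<noteq> 0" "rat_vp p (b0 k) = m" "vge (b k - b0 k) K" "vge (a k - a0 k) K" "vge (a k) m"
      "vge (a0 k) m" "vge (c k - b k) (m+1)" "vge (c0 k - b0 k) (m+1)"
      "vge (c k ^ q - (b k ^ q + of_nat p * a k ^ q)) L" "vge (c0 k ^ q - (b0 k ^ q + of_nat p * a0 k ^ q)) L"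
      by auto
    have Km: "m \<le> K" using K by simp
    have b0m: "vge (b0 k) m" using vge_self k by metis
    have "vge (b0 k + (b k - b0 k)) m" using vge_add[OF b0m vge_mono[OF k(3) Km]] .
    hence bm: "vge (b k) m" by simp
    have db: "vge (b k ^ q - b0 k ^ q) L" unfolding L_def q by (rule vge_powdiff[OF b0m bm k(3)])
    have da: "vge (a k ^ q - a0 k ^ q) L" unfolding L_def q by (rule vge_powdiff[OF k(6) k(5) k(4)])
    have "vge (of_nat p * (a k ^ q - a0 k ^ q)) (1 + L)" by (rule vge_mult[OF vge_p da])
    hence dpa: "vge (of_nat p * (a k ^ q - a0 k ^ q)) L" using vge_mono by fastforce
    have "vge ((c k ^ q - (b k ^ q + of_nat p * a k ^ q)) - (c0 k ^ q - (b0 k ^ q + of_nat p * a0 k ^ q))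
       + (b k ^ q - b0 k ^ q) + of_nat p * (a k ^ q - a0 k ^ q)) L"
      by (rule vge_add[OF vge_add[OF vge_diff[OF k(9) k(10)] db] dpa])
    hence cq: "vge (c k ^ q - c0 k ^ q) L" by (simp add: algebra_simps)
    have "vge (c0 k - b0 k) (rat_vp p (b0 k) + 1)" using k by simp
    from exact_add[OF k(1) this] have c0: "c0 k \<noteq> 0" "rat_vp p (c0 k) = m" using k by auto
    have "vge ((c k - b k) + (b k - b0 k) - (c0 k - b0 k)) (m+1)"
      by (rule vge_diff[OF vge_add[OF k(7) vge_mono[OF k(3) K]] k(8)])
    hence cc: "vge (c k - c0 k) (m+1)" by simp
    from root_unique[OF c0 cc cq vpq] q2 show "vge (c k - c0 k) K" unfolding L_def q by simp
  qed
qed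


lemma T_cls: assumes "cauchy a" "cauchy b"
  shows "qp_add p (qp_pow p (cls b) q) (qp_mult p (qp_of_rat p (of_nat p)) (qp_pow p (cls a) q))
     = cls (\<lambda>k. b k ^ q + of_nat p * a k ^ q)"
  using assms by (simp add: pow_cls cls_of_rat mult_cls add_cls cauchy_pow cauchy_const cauchy_mult)

lemma Vdiff: assumes "cauchy s" "cauchy t"
  shows "ereal (of_int n) \<le> qp_val p (qp_add p (cls s) (qp_neg p (cls t))) \<longleftrightarrow>
    (\<forall>\<^sub>F k in sequentially. vge (s k - t k) n)"
  using assms by (simp add: neg_cls add_cls cauchy_neg val_cls cauchy_add cauchy_diff)

lemma dvd_iff: assumes "cauchy a" "cauchy b"
  shows "qp_val p (cls b) \<le> qp_val p (cls a) \<longleftrightarrow>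
    (\<forall>n. (\<forall>\<^sub>F k in sequentially. vge (b k) n) \<longrightarrow> (\<forall>\<^sub>F k in sequentially. vge (a k) n))"
proof
  assume "qp_val p (cls b) \<le> qp_val p (cls a)"
  thus "\<forall>n. (\<forall>\<^sub>F k in sequentially. vge (b k) n) \<longrightarrow> (\<forall>\<^sub>F k in sequentially. vge (a k) n)"
    using val_cls assms order_trans by metis
next
  assume "\<forall>n. (\<forall>\<^sub>F k in sequentially. vge (b k) n) \<longrightarrow> (\<forall>\<^sub>F k in sequentially. vge (a k) n)"
  thus "qp_val p (cls b) \<le> qp_val p (cls a)"
    by (intro ereal_le_int qp_val_form) (simp add: val_cls assms)
qed

end

theorem proposition4p7:
  fixes p q :: nat and f g :: "'a::topological_space \<Rightarrow> qp"
  assumes "prime p" and "compact (UNIV :: 'a set)"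
    and "prime q" and "q \<noteq> p"
    and "qp_continuous p f" and "qp_continuous p g"
  shows "padic_dvd_star p g f \<longleftrightarrow>
    (\<exists>h :: 'a \<Rightarrow> qp. qp_continuous p h \<and>
       (\<forall>x. qp_pow p (h x) q =
             qp_add p (qp_pow p (g x) q) (qp_mult p (qp_of_rat p (of_nat p)) (qp_pow p (f x) q))))"
proof -
  interpret padic_q p q using assms by unfold_locales auto
  define rep where "rep z = (SOME s. padic_cauchy p s \<and> z = cls s)" for z
  have rep: "padic_cauchy p (rep z) \<and> z = cls (rep z)" if "z \<in> Qp p" for z
    unfolding rep_def using someI_ex[OF Qp_cls[OF that]] .
  have fQ: "f x \<in> Qp p" and gQ: "g x \<in> Qp p" for x using assms(5,6) unfolding qp_continuous_def by auto
  define A where "A x = rep (f x)" for x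
  define B where "B x = rep (g x)" for x
  have A: "padic_cauchy p (A x)" "f x = cls (A x)" for x using rep[OF fQ] unfolding A_def by auto
  have B: "padic_cauchy p (B x)" "g x = cls (B x)" for x using rep[OF gQ] unfolding B_def by auto
  define T where "T x = qp_add p (qp_pow p (g x) q) (qp_mult p (qp_of_rat p (of_nat p)) (qp_pow p (f x) q))" for x
  have T: "T x = cls (\<lambda>k. B x k ^ q + of_nat p * A x k ^ q)" for x
    unfolding T_def using T_cls[OF A(1) B(1)] A(2) B(2) by metis
  have Tc: "padic_cauchy p (\<lambda>k. B x k ^ q + of_nat p * A x k ^ q)" for x
    using A(1) B(1) by (intro cauchy_add cauchy_mult cauchy_pow cauchy_const)
  have contf: "\<exists>U. open U \<and> x \<in> U \<and> (\<forall>y\<in>U. \<forall>\<^sub>F k in sequentially. rat_vge p (A y k - A x k) K)" for x K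
  proof -
    obtain U where "open U" "x \<in> U" "\<forall>y\<in>U. ereal (of_int K) \<le> qp_val p (qp_add p (f y) (qp_neg p (f x)))"
      using assms(5) unfolding qp_continuous_def by blast
    thus ?thesis using Vdiff[OF A(1) A(1)] A(2) by metis
  qed
  have contg: "\<exists>U. open U \<and> x \<in> U \<and> (\<forall>y\<in>U. \<forall>\<^sub>F k in sequentially. rat_vge p (B y k - B x k) K)" for x K
  proof -
    obtain U where "open U" "x \<in> U" "\<forall>y\<in>U. ereal (of_int K) \<le> qp_val p (qp_add p (g y) (qp_neg p (g x)))"
      using assms(6) unfolding qp_continuous_def by blast
    thus ?thesis using Vdiff[OF B(1) B(1)] B(2) by metis
  qed
  show ?thesis
  proof
    assume dvd: "padic_dvd_star p g f"
    have seqdvd: "\<forall>n. (\<forall>\<^sub>F k in sequentially. rat_vge p (B x k) n) \<longrightarrow> (\<forall>\<^sub>F k in sequentially. rat_vge p (A x k) n)" for x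
      using dvd unfolding padic_dvd_star_def using dvd_iff[OF A(1) B(1)] A(2) B(2) by metis
    define H where "H x z \<longleftrightarrow> z \<in> Qp p \<and> qp_pow p z q = T x \<and>
      (\<forall>n. ereal (of_int n) \<le> qp_val p (g x) \<longrightarrow> ereal (of_int (n+1)) \<le> qp_val p (qp_add p z (qp_neg p (g x))))" for x z
    have Hex: "\<exists>z. H x z" for x
    proof -
      obtain c where c: "padic_cauchy p c" "padic_null p (\<lambda>k. c k ^ q - (B x k ^ q + of_nat p * A x k ^ q))"
        "\<forall>n. (\<forall>\<^sub>F k in sequentially. rat_vge p (B x k) n) \<longrightarrow> (\<forall>\<^sub>F k in sequentially. rat_vge p (c k - B x k) (n+1))"
        using root_seq[OF A(1) B(1) seqdvd] by blast
      have "qp_pow p (cls c) q = T x" unfolding pow_cls[OF c(1)] T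
        using cls_eq[OF cauchy_pow[OF c(1)] Tc] c(2) by simp
      moreover have "ereal (of_int (n+1)) \<le> qp_val p (qp_add p (cls c) (qp_neg p (g x)))"
        if "ereal (of_int n) \<le> qp_val p (g x)" for n
        using that c(3) B(2) val_cls[OF B(1)] Vdiff[OF c(1) B(1)] by metis
      ultimately show ?thesis unfolding H_def using cls_in[OF c(1)] by blast
    qed
    define h where "h x = (SOME z. H x z)" for x
    have hH: "H x (h x)" for x unfolding h_def using someI_ex[OF Hex] .
    define C where "C x = rep (h x)" for x
    have C: "padic_cauchy p (C x)" "h x = cls (C x)" for x using rep hH unfolding C_def H_def by auto
    have F1: "padic_null p (\<lambda>k. C x k ^ q - (B x k ^ q + of_nat p * A x k ^ q))" for x
    proof -
      have "qp_pow p (h x) q = T x" using hH unfolding H_def by blast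
      thus ?thesis unfolding T C(2) pow_cls[OF C(1)] using cls_eq[OF cauchy_pow[OF C(1)] Tc] by simp
    qed
    have F2: "(\<forall>\<^sub>F k in sequentially. rat_vge p (C x k - B x k) (n+1))"
      if "\<forall>\<^sub>F k in sequentially. rat_vge p (B x k) n" for x n
    proof -
      have "ereal (of_int n) \<le> qp_val p (g x)" using that val_cls[OF B(1)] B(2) by metis
      hence "ereal (of_int (n+1)) \<le> qp_val p (qp_add p (h x) (qp_neg p (g x)))" using hH unfolding H_def by blast
      thus ?thesis using Vdiff[OF C(1) B(1)] C(2) B(2) by metis
    qed
    have "qp_continuous p h" unfolding qp_continuous_def
    proof (intro conjI allI)
      show "h x \<in> Qp p" for x using hH unfolding H_def by blast
    next
      fix x0 and n :: int
      have "\<exists>U. open U \<and> x0 \<in> U \<and> (\<forall>y\<in>U. \<forall>\<^sub>F k in sequentially. rat_vge p (C y k - C x0 k) n)"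
      proof (cases "padic_null p (B x0)")
        case True
        define K where "K = max n 0"
        obtain U1 where U1: "open U1" "x0 \<in> U1" "\<forall>y\<in>U1. \<forall>\<^sub>F k in sequentially. rat_vge p (A y k - A x0 k) K" using contf by blast
        obtain U2 where U2: "open U2" "x0 \<in> U2" "\<forall>y\<in>U2. \<forall>\<^sub>F k in sequentially. rat_vge p (B y k - B x0 k) K" using contg by blast
        have An: "padic_null p (A x0)" using seqdvd[of x0] True unfolding null_ev by blast
        have "padic_null p (\<lambda>k. (C x0 k - B x0 k) + B x0 k)"
        proof (rule null_add[OF _ True])
          show "padic_null p (\<lambda>k. C x0 k - B x0 k)" unfolding null_ev
          proof
            fix j :: int
            have "\<forall>\<^sub>F k in sequentially. rat_vge p (C x0 k - B x0 k) (j - 1 + 1)"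
              using F2 True unfolding null_ev by blast
            thus "\<forall>\<^sub>F k in sequentially. rat_vge p (C x0 k - B x0 k) j" by simp
          qed
        qed
        hence Cn: "padic_null p (C x0)" by simp
        have "\<forall>\<^sub>F k in sequentially. rat_vge p (C y k - C x0 k) n" if y: "y \<in> U1 \<inter> U2" for y
        proof -
          have e1A: "\<forall>\<^sub>F k in sequentially. rat_vge p (A y k - A x0 k) K" using U1(3) y by blast
          have e2A: "\<forall>\<^sub>F k in sequentially. rat_vge p (A x0 k) K" using An unfolding null_ev by blast
          have ea: "\<forall>\<^sub>F k in sequentially. rat_vge p (A y k) K"
            using eventually_conj[OF e1A e2A]
          proof (rule eventually_mono)
            fix k assume "rat_vge p (A y k - A x0 k) K \<and> rat_vge p (A x0 k) K"
            hence "rat_vge p ((A y k - A x0 k) + A x0 k) K" using vge_add by blast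
            thus "rat_vge p (A y k) K" by simp
          qed
          have e1B: "\<forall>\<^sub>F k in sequentially. rat_vge p (B y k - B x0 k) K" using U2(3) y by blast
          have e2B: "\<forall>\<^sub>F k in sequentially. rat_vge p (B x0 k) K" using True unfolding null_ev by blast
          have eb: "\<forall>\<^sub>F k in sequentially. rat_vge p (B y k) K"
            using eventually_conj[OF e1B e2B]
          proof (rule eventually_mono)
            fix k assume "rat_vge p (B y k - B x0 k) K \<and> rat_vge p (B x0 k) K"
            hence "rat_vge p ((B y k - B x0 k) + B x0 k) K" using vge_add by blast
            thus "rat_vge p (B y k) K" by simp
          qed
          have ec: "\<forall>\<^sub>F k in sequentially. rat_vge p (C y k) K"
            by (rule small_seq[OF _ ea eb F1]) (simp add: K_def)
          show ?thesis using eventually_conj[OF ec Cn[unfolded null_ev, rule_format, of K]]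
            by (rule eventually_mono) (use vge_diff vge_mono K_def in fastforce)
        qed
        thus ?thesis using U1 U2 by (intro exI[of _ "U1 \<inter> U2"]) auto
      next
        case False
        obtain m where m: "\<forall>\<^sub>F k in sequentially. B x0 k \<noteq> 0 \<and> rat_vp p (B x0 k) = m"
          using cauchy_exact[OF B(1) False] by blast
        have bm0: "\<forall>\<^sub>F k in sequentially. rat_vge p (B x0 k) m" using m by (rule eventually_mono) (simp add: rat_vge_def)
        define K where "K = max n (m+1)"
        obtain U1 where U1: "open U1" "x0 \<in> U1" "\<forall>y\<in>U1. \<forall>\<^sub>F k in sequentially. rat_vge p (A y k - A x0 k) K" using contf by blast
        obtain U2 where U2: "open U2" "x0 \<in> U2" "\<forall>y\<in>U2. \<forall>\<^sub>F k in sequentially. rat_vge p (B y k - B x0 k) K" using contg by blast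
        have "\<forall>\<^sub>F k in sequentially. rat_vge p (C y k - C x0 k) n" if y: "y \<in> U1 \<inter> U2" for y
        proof -
          have h1: "\<forall>\<^sub>F k in sequentially. rat_vge p (B y k - B x0 k) K" using U2 y by blast
          have bm: "\<forall>\<^sub>F k in sequentially. rat_vge p (B y k) m"
            using eventually_conj[OF h1 bm0]
          proof (rule eventually_mono)
            fix k assume "rat_vge p (B y k - B x0 k) K \<and> rat_vge p (B x0 k) m"
            moreover have "m \<le> K" unfolding K_def by simp
            ultimately have "rat_vge p ((B y k - B x0 k) + B x0 k) m"
              using vge_add[OF vge_mono[of "B y k - B x0 k" K m]] by blast
            thus "rat_vge p (B y k) m" by simp
          qed
          have "\<forall>\<^sub>F k in sequentially. rat_vge p (C y k - C x0 k) K"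
          proof (rule cont_seq[OF m h1])
            show "\<forall>\<^sub>F k in sequentially. rat_vge p (A y k - A x0 k) K" using U1 y by blast
            show "K \<ge> m + 1" unfolding K_def by simp
            show "\<forall>\<^sub>F k in sequentially. rat_vge p (A y k) m" using seqdvd bm by blast
            show "\<forall>\<^sub>F k in sequentially. rat_vge p (A x0 k) m" using seqdvd bm0 by blast
            show "\<forall>\<^sub>F k in sequentially. rat_vge p (C y k - B y k) (m+1)" using F2 bm by blast
            show "\<forall>\<^sub>F k in sequentially. rat_vge p (C x0 k - B x0 k) (m+1)" using F2 bm0 by blast
          qed (rule F1)+
          thus ?thesis by (rule eventually_mono) (use vge_mono K_def in fastforce)
        qed
        thus ?thesis using U1 U2 by (intro exI[of _ "U1 \<inter> U2"]) auto
      qed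
      thus "\<exists>U. open U \<and> x0 \<in> U \<and> (\<forall>y\<in>U. ereal (of_int n) \<le> qp_val p (qp_add p (h y) (qp_neg p (h x0))))"
        using Vdiff[OF C(1) C(1)] C(2) by metis
    qed
    moreover have "\<forall>x. qp_pow p (h x) q = T x" using hH unfolding H_def by blast
    ultimately show "\<exists>h. qp_continuous p h \<and> (\<forall>x. qp_pow p (h x) q = qp_add p (qp_pow p (g x) q) (qp_mult p (qp_of_rat p (of_nat p)) (qp_pow p (f x) q)))"
      unfolding T_def by blast
  next
    assume "\<exists>h. qp_continuous p h \<and> (\<forall>x. qp_pow p (h x) q = qp_add p (qp_pow p (g x) q) (qp_mult p (qp_of_rat p (of_nat p)) (qp_pow p (f x) q)))"
    then obtain h where h: "qp_continuous p h" "\<And>x. qp_pow p (h x) q = T x" unfolding T_def by blast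
    show "padic_dvd_star p g f" unfolding padic_dvd_star_def
    proof
      fix x
      have hQ: "h x \<in> Qp p" using h(1) unfolding qp_continuous_def by blast
      obtain c where c: "padic_cauchy p c" "h x = cls c" using Qp_cls[OF hQ] by blast
      have "cls (\<lambda>k. c k ^ q) = cls (\<lambda>k. B x k ^ q + of_nat p * A x k ^ q)" using h(2)[of x] c pow_cls T by metis
      hence N: "padic_null p (\<lambda>k. c k ^ q - (B x k ^ q + of_nat p * A x k ^ q))"
        using cls_eq[OF cauchy_pow[OF c(1)] Tc] by simp
      have "qp_val p (cls (B x)) \<le> qp_val p (cls (A x))"
        unfolding dvd_iff[OF A(1) B(1)] using back_seq[OF A(1) N] by blast
      thus "qp_val p (g x) \<le> qp_val p (f x)" using A(2) B(2) by metis
    qed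
  qed
qed

end
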